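(* Let $z=(z_1,\dots,z_l)$ be a complex vector split into sub-vectors, and let $g_j(z)=\tilde g_j(z)+c_j$, $j=1,\dots,m$, where $c_j\in\mathbb C$ and each $\tilde g_j(z_1,\dots,z_l)$ is multi-linear in the sub-vectors; let $f=\sum_{j=1}^m|g_j|^2$. Let \[ \Xi=\begin{pmatrix} z_1&z_1&\cdots&z_1\\ -z_2&0&\cdots&0\\ 0&-z_3&\cdots&0\\ \vdots&\vdots&\ddots&\vdots\\ 0&0&\cdots&-z_l\end{pmatrix} \] (with $l-1$ block columns, the $i$-th having $z_1$ in the first block and $-z_{i+1}$ in the $(i+1)$-st block). Assume at the current point $z$ the kernel of the mixed Wirtinger Hessian $\frac{\partial^2 f}{\partial\bar z\partial z}$ is spanned by the columns of $\Xi$. Then $\frac{\partial^2 f}{\partial\bar z\partial z}+\Xi\Xi^*$ is invertible, the limit $\lim_{\varepsilon\to0^+}\big(\frac{\partial^2 f}{\partial\bar z\partial z}+\varepsilon\Xi\Xi^*\big)^{-1}\frac{\partial f}{\partial\bar z}$ exists, and \[ z-\Big(\tfrac{\partial^2 f}{\partial\bar z\partial z}+\Xi\Xi^*\Big)^{-1}\tfrac{\partial f}{\partial\bar z}=z-\lim_{\varepsilon\to0}\Big(\tfrac{\partial^2 f}{\partial\bar z\partial z}+\varepsilon\Xi\Xi^*\Big)^{-1}\tfrac{\partial f}{\partial\bar z}. \]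
   Context: Wirtinger derivatives: $\frac{\partial}{\partial\bar z}=\frac12(\frac{\partial}{\partial\mathrm{Re}\,z}+i\frac{\partial}{\partial\mathrm{Im}\,z})$ componentwise; for $f=\sum|g_j|^2$ with $g_j$ holomorphic, $\frac{\partial f}{\partial\bar z}=\sum_j g_j\overline{g_j'}$ and $\frac{\partial^2 f}{\partial\bar z\partial z}=\sum_j\overline{g_j'}(g_j')^T$, where $g_j'$ is the column vector of holomorphic derivatives. Multi-linear means linear in each sub-vector $z_i$ separately when the others are fixed. *)

theory Defs
  imports "HOL-Analysis.Analysis"
begin

text \<open>Coordinates of z are indexed by a finite type 'n; the function blk assigns to
  each coordinate the number (in 1..l) of the sub-vector z_1,...,z_l it belongs to.\<close>

definition blk_upd :: "('n \<Rightarrow> nat) \<Rightarrow> nat \<Rightarrow> complex^'n \<Rightarrow> complex^'n \<Rightarrow> complex^'n" where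
  "blk_upd blk k z u = (\<chi> i. if blk i = k then u $ i else z $ i)"

definition multilinear_blocks :: "('n \<Rightarrow> nat) \<Rightarrow> nat \<Rightarrow> (complex^'n \<Rightarrow> complex) \<Rightarrow> bool" where
  "multilinear_blocks blk l G \<longleftrightarrow>
     (\<forall>k\<in>{1..l}. \<forall>z u v. \<forall>a::complex.
        G (blk_upd blk k z (u + v)) = G (blk_upd blk k z u) + G (blk_upd blk k z v) \<and>
        G (blk_upd blk k z (a *s u)) = a * G (blk_upd blk k z u))"

definition hol_grad :: "(complex^'n \<Rightarrow> complex) \<Rightarrow> complex^'n \<Rightarrow> complex^'n" where
  "hol_grad g z = (\<chi> i. deriv (\<lambda>t. g (z + t *s axis i 1)) 0)"

text \<open>For f = sum_j |g_j|^2 with g_j holomorphic: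
  d f / d zbar = sum_j g_j conj(g_j'),  d^2 f/(d zbar d z) = sum_j conj(g_j') (g_j')^T.\<close>
definition wirt_grad :: "nat \<Rightarrow> (nat \<Rightarrow> complex^'n \<Rightarrow> complex) \<Rightarrow> complex^'n \<Rightarrow> complex^'n" where
  "wirt_grad m g z = (\<Sum>j\<in>{1..m}. g j z *s (\<chi> i. cnj (hol_grad (g j) z $ i)))"

definition wirt_hess :: "nat \<Rightarrow> (nat \<Rightarrow> complex^'n \<Rightarrow> complex) \<Rightarrow> complex^'n \<Rightarrow> complex^'n^'n" where
  "wirt_hess m g z = (\<Sum>j\<in>{1..m}. (\<chi> r s. cnj (hol_grad (g j) z $ r) * hol_grad (g j) z $ s))"

definition Xi_col :: "('n \<Rightarrow> nat) \<Rightarrow> complex^'n \<Rightarrow> nat \<Rightarrow> complex^'n" where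
  "Xi_col blk z i = (\<chi> k. if blk k = 1 then z $ k else if blk k = i + 1 then - z $ k else 0)"

definition Xi_XiH :: "('n \<Rightarrow> nat) \<Rightarrow> nat \<Rightarrow> complex^'n \<Rightarrow> complex^'n^'n" where
  "Xi_XiH blk l z = (\<Sum>i\<in>{1..l-1}. (\<chi> r s. Xi_col blk z i $ r * cnj (Xi_col blk z i $ s)))"

end

theory Submission imports Defs begin

lemma minv: assumes "invertible (A::'a::semiring_1^'n^'n)"
  shows "A ** matrix_inv A = mat 1 \<and> matrix_inv A ** A = mat 1"
  using assms unfolding invertible_def matrix_inv_def by (rule someI_ex)

definition dotc :: "complex^'n \<Rightarrow> complex^'n \<Rightarrow> complex" where
  "dotc u v = (\<Sum>k\<in>UNIV. u$k * v$k)"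
definition cin :: "complex^'n \<Rightarrow> complex^'n \<Rightarrow> complex" where
  "cin u v = (\<Sum>k\<in>UNIV. cnj (u$k) * v$k)"

lemma re_cnj_mult: "Re (cnj w * w) = (cmod w)^2"
  unfolding cmod_power2 by (simp add: power2_eq_square)

lemma cin_self_zero: assumes "cin x x = 0" shows "x = (0::complex^'n)"
proof -
  have "Re (cin x x) = (\<Sum>k\<in>UNIV. (cmod (x$k))^2)"
    unfolding cin_def Re_sum re_cnj_mult by simp
  then have "(\<Sum>k\<in>UNIV. (cmod (x$k))^2) = 0" using assms by simp
  then have "\<forall>k\<in>UNIV. (cmod (x$k))^2 = 0"
    by (subst (asm) sum_nonneg_eq_0_iff) auto
  then show ?thesis by (simp add: vec_eq_iff)
qed


lemma ml_add: "multilinear_blocks blk l G \<Longrightarrow> K \<in> {1..l} \<Longrightarrow>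
   G (blk_upd blk K z (u + v)) = G (blk_upd blk K z u) + G (blk_upd blk K z v)"
  unfolding multilinear_blocks_def by simp
lemma ml_scale: "multilinear_blocks blk l G \<Longrightarrow> K \<in> {1..l} \<Longrightarrow>
   G (blk_upd blk K z (a *s u)) = a * G (blk_upd blk K z u)"
  unfolding multilinear_blocks_def by simp

lemma blk_lin_sum:
  assumes "multilinear_blocks blk l G" "K \<in> {1..l}" "finite S"
  shows "G (blk_upd blk K z (sum f S)) = (\<Sum>s\<in>S. G (blk_upd blk K z (f s)))"
  using assms(3)
proof (induction S rule: finite_induct)
  case empty
  have "G (blk_upd blk K z ((0::complex) *s 0)) = 0 * G (blk_upd blk K z 0)"
    by (rule ml_scale[OF assms(1,2)])
  then show ?case by simp
next
  case (insert x F)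
  then show ?case using ml_add[OF assms(1,2)] by simp
qed

lemma blk_upd_cong: "(\<And>k. blk k = K \<Longrightarrow> u$k = v$k) \<Longrightarrow> blk_upd blk K z u = blk_upd blk K z v"
  unfolding blk_upd_def by (simp add: vec_eq_iff)

lemma step2:
  assumes "multilinear_blocks blk l G" "K \<in> {1..l}"
  shows "(\<Sum>k\<in>UNIV. if blk k = K then u$k * G (blk_upd blk K z (axis k 1)) else 0)
     = G (blk_upd blk K z u)"
proof -
  have "blk_upd blk K z u = blk_upd blk K z (\<Sum>k\<in>{k. blk k = K}. u$k *s axis k 1)"
  proof (rule blk_upd_cong)
    fix k assume "blk k = K"
    have "(\<Sum>x\<in>{k. blk k = K}. u$x * (axis x 1 :: complex^'a) $ k) = (\<Sum>x\<in>{k. blk k = K}. if k = x then u$x else 0)"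
      by (intro sum.cong) (auto simp: axis_def)
    also have "\<dots> = u$k" using \<open>blk k = K\<close> by (simp add: sum.delta)
    finally show "u$k = (\<Sum>k\<in>{k. blk k = K}. u$k *s axis k 1) $ k" by (simp add: sum_component)
  qed
  then have "G (blk_upd blk K z u) = (\<Sum>k\<in>{k. blk k = K}. G (blk_upd blk K z (u$k *s axis k 1)))"
    using blk_lin_sum[OF assms, of "{k. blk k = K}"] by simp
  also have "\<dots> = (\<Sum>k\<in>{k. blk k = K}. u$k * G (blk_upd blk K z (axis k 1)))"
    using ml_scale[OF assms] by simp
  also have "\<dots> = (\<Sum>k\<in>UNIV. if blk k = K then u$k * G (blk_upd blk K z (axis k 1)) else 0)"
    using sum.inter_filter[of UNIV "\<lambda>k. u$k * G (blk_upd blk K z (axis k 1))" "\<lambda>k. blk k = K"]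
    by simp
  finally show ?thesis by simp
qed

lemma hol_grad_lin:
  assumes "multilinear_blocks blk l G" "\<forall>i. blk i \<in> {1..l}"
  shows "hol_grad (\<lambda>w. G w + c) z $ k = G (blk_upd blk (blk k) z (axis k 1))"
proof -
  let ?K = "blk k"
  have eq: "G (z + t *s axis k 1) + c = (G z + c) + t * G (blk_upd blk ?K z (axis k 1))" for t
  proof -
    have "z + t *s axis k 1 = blk_upd blk ?K z (z + t *s axis k 1)"
      unfolding blk_upd_def by (simp add: vec_eq_iff axis_def)
    moreover have "G (blk_upd blk ?K z (z + t *s axis k 1)) = G (blk_upd blk ?K z z) + t * G (blk_upd blk ?K z (axis k 1))"
      using ml_add[OF assms(1)] ml_scale[OF assms(1)] assms(2) by simp
    moreover have "blk_upd blk ?K z z = z" unfolding blk_upd_def by (simp add: vec_eq_iff)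
    ultimately show ?thesis by simp
  qed
  have "((\<lambda>t. (G z + c) + t * G (blk_upd blk ?K z (axis k 1))) has_field_derivative G (blk_upd blk ?K z (axis k 1))) (at 0)"
    by (auto intro!: derivative_eq_intros)
  then have "deriv (\<lambda>t. G (z + t *s axis k 1) + c) 0 = G (blk_upd blk ?K z (axis k 1))"
    unfolding eq by (rule DERIV_imp_deriv)
  then show ?thesis unfolding hol_grad_def by simp
qed

lemma F1:
  assumes "multilinear_blocks blk l G" "\<forall>i. blk i \<in> {1..l}" "i \<in> {1..l-1}"
  shows "dotc (hol_grad (\<lambda>w. G w + c) z) (Xi_col blk z i) = 0"
proof -
  have l1: "1 \<in> {1..l}" "i+1 \<in> {1..l}" proof -
    have "l \<ge> 1" using assms(2) by (meson atLeastAtMost_iff order_trans)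
    then show "1 \<in> {1..l}" "i+1 \<in> {1..l}" using assms(3) by auto
  qed
  have "dotc (hol_grad (\<lambda>w. G w + c) z) (Xi_col blk z i)
     = (\<Sum>k\<in>UNIV. (if blk k = 1 then z$k * G (blk_upd blk 1 z (axis k 1)) else 0)
          + (if blk k = i+1 then (-z)$k * G (blk_upd blk (i+1) z (axis k 1)) else 0))"
    unfolding dotc_def
  proof (intro sum.cong refl)
    fix k
    show "hol_grad (\<lambda>w. G w + c) z $ k * Xi_col blk z i $ k =
         (if blk k = 1 then z$k * G (blk_upd blk 1 z (axis k 1)) else 0)
          + (if blk k = i+1 then (-z)$k * G (blk_upd blk (i+1) z (axis k 1)) else 0)"
    proof (cases "blk k = 1")
      case True
      then show ?thesis using assms(3) by (simp add: hol_grad_lin[OF assms(1,2)] Xi_col_def mult.commute)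
    next
      case False
      then show ?thesis
        by (cases "blk k = i+1") (simp_all add: hol_grad_lin[OF assms(1,2)] Xi_col_def mult.commute)
    qed
  qed
  also have "\<dots> = G (blk_upd blk 1 z z) + G (blk_upd blk (i+1) z (-z))"
    by (simp only: sum.distrib step2[OF assms(1) l1(1)] step2[OF assms(1) l1(2)])
  also have "\<dots> = G z + - G z"
  proof -
    have m1: "(-1) *s z = - z" by (simp add: vec_eq_iff)
    have "G (blk_upd blk (i+1) z ((-1) *s z)) = (-1) * G (blk_upd blk (i+1) z z)"
      by (rule ml_scale[OF assms(1) l1(2)])
    then have "G (blk_upd blk (i+1) z (-z)) = - G (blk_upd blk (i+1) z z)" unfolding m1 by simp
    moreover have bz: "blk_upd blk K z z = z" for K unfolding blk_upd_def by (simp add: vec_eq_iff)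
    ultimately show ?thesis by simp
  qed
  finally show ?thesis by simp
qed


lemma cin_sum_right: "cin w (sum f S) = (\<Sum>s\<in>S. cin w (f s))"
  unfolding cin_def by (simp add: sum_component sum_distrib_left sum.swap[of _ S])
lemma cin_sum_left: "cin (sum f S) v = (\<Sum>s\<in>S. cin (f s) v)"
  unfolding cin_def by (simp add: sum_component sum_distrib_right sum.swap[of _ S] cnj_sum)
lemma cin_scale_right: "cin w (c *s v) = c * cin w v"
  unfolding cin_def by (simp add: sum_distrib_left algebra_simps)
lemma cin_scale_left: "cin (c *s w) v = cnj c * cin w v"
  unfolding cin_def by (simp add: sum_distrib_left algebra_simps)
lemma cin_add_right: "cin w (u + v) = cin w u + cin w v"
  unfolding cin_def by (simp add: sum.distrib algebra_simps)
lemma cin_add_left: "cin (u + w) v = cin u v + cin w v"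
  unfolding cin_def by (simp add: sum.distrib algebra_simps)
lemma cin_zero_left: "cin 0 v = 0" unfolding cin_def by simp
lemma cin_zero_right: "cin v 0 = 0" unfolding cin_def by simp
lemma cin_cnj: "cnj (cin u v) = cin v u"
  unfolding cin_def by (simp add: cnj_sum mult.commute)
lemma cin_cnjvec: "cin w (\<chi> r. cnj (a $ r)) = cnj (dotc a w)"
  unfolding cin_def dotc_def by (simp add: cnj_sum mult.commute)

lemma L_Hv: "wirt_hess m g z *v y =
   (\<Sum>j\<in>{1..m}. dotc (hol_grad (g j) z) y *s (\<chi> r. cnj (hol_grad (g j) z $ r)))"
  unfolding wirt_hess_def matrix_vector_mult_def dotc_def
  by (simp add: vec_eq_iff sum_component sum_distrib_left sum_distrib_right sum.swap[of _ "{1..m}"] algebra_simps)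
     (rule allI, rule sum.swap)

lemma L_cinH: "cin w (wirt_hess m g z *v y) =
   (\<Sum>j\<in>{1..m}. cnj (dotc (hol_grad (g j) z) w) * dotc (hol_grad (g j) z) y)"
  unfolding L_Hv cin_sum_right cin_scale_right cin_cnjvec by (simp add: mult.commute)

lemma L_Xv: "Xi_XiH blk l z *v y = (\<Sum>i\<in>{1..l-1}. cin (Xi_col blk z i) y *s Xi_col blk z i)"
  unfolding Xi_XiH_def matrix_vector_mult_def cin_def
  by (simp add: vec_eq_iff sum_component sum_distrib_left sum_distrib_right sum.swap[of _ "{1..l-1}"] algebra_simps)
     (rule allI, rule sum.swap)

lemma L_cinX: "cin w (Xi_XiH blk l z *v y) = (\<Sum>i\<in>{1..l-1}. cin w (Xi_col blk z i) * cin (Xi_col blk z i) y)"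
  unfolding L_Xv cin_sum_right cin_scale_right by (simp add: mult.commute)

lemma scaleR_mv: "((e::real) *\<^sub>R (A::complex^'n^'m)) *v y = e *\<^sub>R (A *v y)"
  by (simp add: vec_eq_iff matrix_vector_mult_def scaleR_sum_right)


lemma aux_pq:
  fixes p q e :: real
  assumes "p + e * q = 0" "p \<ge> 0" "q \<ge> 0" "e > 0"
  shows "p = 0" "q = 0"
proof -
  have "e * q \<ge> 0" using assms by simp
  then show "p = 0" using assms by linarith
  then have "e * q = 0" using assms by linarith
  then show "q = 0" using assms by simp
qed

theorem lemma9:
  fixes blk :: "'n::finite \<Rightarrow> nat" and l m :: nat
    and gt :: "nat \<Rightarrow> complex^'n \<Rightarrow> complex" and c :: "nat \<Rightarrow> complex"
    and z :: "complex^'n"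
  defines "g \<equiv> (\<lambda>j w. gt j w + c j)"
  defines "H \<equiv> wirt_hess m g z"
  defines "b \<equiv> wirt_grad m g z"
  defines "X \<equiv> Xi_XiH blk l z"
  assumes blk_range: "\<forall>i. blk i \<in> {1..l}"
    and multilin: "\<forall>j\<in>{1..m}. multilinear_blocks blk l (gt j)"
    and kernel: "{x. H *v x = 0} = vec.span (Xi_col blk z ` {1..l-1})"
  shows "invertible (H + X)
    \<and> (\<exists>L. ((\<lambda>\<epsilon>::real. matrix_inv (H + \<epsilon> *\<^sub>R X) *v b) \<longlongrightarrow> L) (at_right 0))
    \<and> z - matrix_inv (H + X) *v b
        = z - Lim (at_right 0) (\<lambda>\<epsilon>::real. matrix_inv (H + \<epsilon> *\<^sub>R X) *v b)"
proof -
  define a where "a j = hol_grad (g j) z" for j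
  define xi where "xi i = Xi_col blk z i" for i
  have F: "dotc (a j) (xi i) = 0" if "j \<in> {1..m}" "i \<in> {1..l-1}" for i j
    unfolding a_def xi_def g_def using F1[OF multilin[rule_format, OF that(1)] blk_range that(2)] by simp
  have cinH: "cin w (H *v y) = (\<Sum>j\<in>{1..m}. cnj (dotc (a j) w) * dotc (a j) y)" for w y
    unfolding H_def a_def by (rule L_cinH)
  have Hv: "H *v y = (\<Sum>j\<in>{1..m}. dotc (a j) y *s (\<chi> r. cnj (a j $ r)))" for y
    unfolding H_def a_def by (rule L_Hv)
  have cinX: "cin w (X *v y) = (\<Sum>i\<in>{1..l-1}. cin w (xi i) * cin (xi i) y)" for w y
    unfolding X_def xi_def by (rule L_cinX)
  have Xv: "X *v y = (\<Sum>i\<in>{1..l-1}. cin (xi i) y *s xi i)" for y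
    unfolding X_def xi_def by (rule L_Xv)
  have Hxi: "cin (xi i) (H *v y) = 0" if "i \<in> {1..l-1}" for i y
    unfolding cinH using F that by simp
  have bxi: "cin (xi i) b = 0" if "i \<in> {1..l-1}" for i
  proof -
    have "cin (xi i) b = (\<Sum>j\<in>{1..m}. g j z * cnj (dotc (a j) (xi i)))"
      unfolding b_def wirt_grad_def cin_sum_right cin_scale_right a_def cin_cnjvec by simp
    then show ?thesis using F that by simp
  qed
  have inv: "invertible (H + e *\<^sub>R X)" if "e > 0" for e :: real
    unfolding invertible_left_inverse matrix_left_invertible_ker
  proof (intro allI impI)
    fix x assume "(H + e *\<^sub>R X) *v x = 0"
    then have "H *v x + e *\<^sub>R (X *v x) = 0"
      by (simp add: matrix_vector_mult_add_rdistrib scaleR_mv)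
    then have "cin x (H *v x + e *\<^sub>R (X *v x)) = 0" by (simp add: cin_zero_right)
    moreover have sR: "e *\<^sub>R (X *v x) = of_real e *s (X *v x)" by (subst vec_eq_iff, intro allI, simp only: vector_scaleR_component vector_smult_component, simp add: scaleR_conv_of_real)
    ultimately have "cin x (H *v x) + of_real e * cin x (X *v x) = 0"
      unfolding sR cin_add_right cin_scale_right by simp
    then have "Re (cin x (H *v x)) + e * Re (cin x (X *v x)) = 0"
      by (metis Re_complex_of_real mult_zero_right plus_complex.sel(1) times_complex.sel(1) zero_complex.sel(1) Im_complex_of_real mult_zero_left diff_zero)
    moreover have A: "Re (cin x (H *v x)) = (\<Sum>j\<in>{1..m}. (cmod (dotc (a j) x))^2)"
      unfolding cinH Re_sum re_cnj_mult by simp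
    moreover have B: "Re (cin x (X *v x)) = (\<Sum>i\<in>{1..l-1}. (cmod (cin (xi i) x))^2)"
    proof -
      have "cin x (X *v x) = (\<Sum>i\<in>{1..l-1}. cnj (cin (xi i) x) * cin (xi i) x)"
        unfolding cinX cin_cnj ..
      then show ?thesis by (simp only: Re_sum re_cnj_mult)
    qed
    moreover have "(\<Sum>j\<in>{1..m}. (cmod (dotc (a j) x))^2) \<ge> 0" "(\<Sum>i\<in>{1..l-1}. (cmod (cin (xi i) x))^2) \<ge> 0"
      by (simp_all add: sum_nonneg)
    ultimately have s1: "(\<Sum>j\<in>{1..m}. (cmod (dotc (a j) x))^2) = 0"
      and s2: "(\<Sum>i\<in>{1..l-1}. (cmod (cin (xi i) x))^2) = 0"
      using aux_pq[OF _ _ _ \<open>e > 0\<close>] by metis+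
    have d0: "dotc (a j) x = 0" if "j \<in> {1..m}" for j
      using s1 that by (subst (asm) sum_nonneg_eq_0_iff) auto
    have c0: "cin (xi i) x = 0" if "i \<in> {1..l-1}" for i
      using s2 that by (subst (asm) sum_nonneg_eq_0_iff) auto
    have "H *v x = 0" unfolding Hv using d0 by simp
    then have xs: "x \<in> vec.span (xi ` {1..l-1})" using kernel unfolding xi_def by blast
    have "cin w x = 0" if "w \<in> vec.span (xi ` {1..l-1})" for w
      using that
    proof (induction rule: vec.span_induct)
      case base
      show ?case unfolding vec.subspace_def
        by (simp add: cin_zero_left cin_add_left cin_scale_left)
    next
      case (step w)
      then show ?case using c0 by auto
    qed
    then have "cin x x = 0" using xs by blast
    then show "x = 0" by (rule cin_self_zero)
  qed
  define y where "y = matrix_inv (H + X) *v b"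
  have invX: "invertible (H + X)" using inv[of 1] by simp
  have "(H + X) *v y = b"
    unfolding y_def matrix_vector_mul_assoc using minv[OF invX] by simp
  then have hy: "H *v y + X *v y = b" by (simp add: matrix_vector_mult_add_rdistrib)
  define v where "v = X *v y"
  have cv: "cin (xi i) v = 0" if "i \<in> {1..l-1}" for i
  proof -
    have "cin (xi i) (H *v y) + cin (xi i) v = cin (xi i) b"
      using hy unfolding v_def by (simp add: cin_add_right[symmetric])
    then show ?thesis using Hxi[OF that] bxi[OF that] by simp
  qed
  have "cin v v = 0"
  proof -
    have "cin v v = (\<Sum>i\<in>{1..l-1}. cnj (cin (xi i) y) * cin (xi i) v)"
      unfolding v_def[of] Xv cin_sum_left cin_scale_left by (simp add: v_def)
    then show ?thesis using cv by simp
  qed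
  then have "v = 0" by (rule cin_self_zero)
  then have Hy: "H *v y = b" using hy unfolding v_def by simp
  have eq: "matrix_inv (H + e *\<^sub>R X) *v b = y" if "e > 0" for e :: real
  proof -
    have "(H + e *\<^sub>R X) *v y = b"
      using Hy \<open>v = 0\<close> unfolding v_def by (simp add: matrix_vector_mult_add_rdistrib scaleR_mv)
    then have "matrix_inv (H + e *\<^sub>R X) *v b = (matrix_inv (H + e *\<^sub>R X) ** (H + e *\<^sub>R X)) *v y"
      by (simp add: matrix_vector_mul_assoc[symmetric])
    then show ?thesis using minv[OF inv[OF that]] by simp
  qed
  have ev: "eventually (\<lambda>e::real. matrix_inv (H + e *\<^sub>R X) *v b = y) (at_right 0)"
    using eventually_at_right_less[of "0::real"] by (rule eventually_mono) (rule eq)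
  have T: "((\<lambda>e::real. matrix_inv (H + e *\<^sub>R X) *v b) \<longlongrightarrow> y) (at_right 0)"
    using tendsto_eventually[OF ev] .
  have "Lim (at_right 0) (\<lambda>e::real. matrix_inv (H + e *\<^sub>R X) *v b) = y"
    by (rule tendsto_Lim[OF trivial_limit_at_right_real T])
  then show ?thesis using invX T unfolding y_def by auto
qed

end
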